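(* Let $p>2$, $\mathcal{G}\in\mathbf{G}$, and let $u\in H^1(\mathcal{G})$, $u>0$ on $\mathcal G$, solve $u''+u^{p-1}=\lambda u$ on every edge for some $\lambda\in\mathbb{R}$, with the Kirchhoff condition at every vertex. Then \[ \|u\|_{L^\infty(\mathcal G)}\le\left(\frac p2\lambda+\frac{p\pi^2}{2e_0^2}\right)^{\frac1{p-2}} . \]
   Context: $\mathbf{G}$: connected metric graphs with at most countably many edges, finite vertex degrees and $e_0:=\inf_{e}|e|>0$ (the infimum of the edge lengths). Kirchhoff condition: at each vertex the sum of the outgoing derivatives of $u$ along incident edges is zero. *)

theory Defs
  imports "HOL-Analysis.Analysis"
begin

text \<open>A metric graph: vertex set V, edge set E (countable), each edge e has length
  len e \<in> (0,\<infinity>]. A bounded edge (len e < \<infinity>) is identified with [0, len e]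
  joining src e (at 0) to tgt e (at len e); an unbounded edge (half-line) is [0,\<infinity>)
  attached at src e (at 0).\<close>

definition edge_dom :: "ereal \<Rightarrow> real set" where
  "edge_dom l = {x. 0 \<le> x \<and> ereal x \<le> l}"

definition graph_adj :: "'e set \<Rightarrow> ('e \<Rightarrow> 'v) \<Rightarrow> ('e \<Rightarrow> 'v) \<Rightarrow> ('e \<Rightarrow> ereal) \<Rightarrow> ('v \<times> 'v) set" where
  "graph_adj E src tgt len =
     {(v, w). \<exists>e\<in>E. len e < \<infinity> \<and> ((src e = v \<and> tgt e = w) \<or> (src e = w \<and> tgt e = v))}"

definition metric_graph_G :: "'v set \<Rightarrow> 'e set \<Rightarrow> ('e \<Rightarrow> 'v) \<Rightarrow> ('e \<Rightarrow> 'v) \<Rightarrow> ('e \<Rightarrow> ereal) \<Rightarrow> bool" where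
  "metric_graph_G V E src tgt len \<longleftrightarrow>
     E \<noteq> {} \<and> countable E \<and>
     (\<forall>e\<in>E. 0 < len e \<and> src e \<in> V \<and> (len e < \<infinity> \<longrightarrow> tgt e \<in> V)) \<and>
     (\<forall>v\<in>V. finite {e\<in>E. src e = v} \<and> finite {e\<in>E. len e < \<infinity> \<and> tgt e = v}) \<and>
     (\<forall>v\<in>V. \<forall>w\<in>V. (v, w) \<in> (graph_adj E src tgt len)\<^sup>*) \<and>
     0 < (INF e\<in>E. len e)"

text \<open>Minimal edge length e_0 (possibly \<infinity> if all edges are half-lines).\<close>
definition min_edge_len :: "'e set \<Rightarrow> ('e \<Rightarrow> ereal) \<Rightarrow> ereal" where
  "min_edge_len E len = (INF e\<in>E. len e)"

text \<open>u \<in> H^1(G): on each edge u_e is differentiable (derivative u'_e, one-sided at the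
  endpoints), u is continuous at the vertices, and \<Sum>_e \<integral>_e (u_e^2 + u_e'^2) < \<infinity>.\<close>
definition in_H1 :: "'v set \<Rightarrow> 'e set \<Rightarrow> ('e \<Rightarrow> 'v) \<Rightarrow> ('e \<Rightarrow> 'v) \<Rightarrow> ('e \<Rightarrow> ereal)
    \<Rightarrow> ('e \<Rightarrow> real \<Rightarrow> real) \<Rightarrow> ('e \<Rightarrow> real \<Rightarrow> real) \<Rightarrow> bool" where
  "in_H1 V E src tgt len u u' \<longleftrightarrow>
     (\<forall>e\<in>E. \<forall>x\<in>edge_dom (len e). (u e has_real_derivative u' e x) (at x within edge_dom (len e))) \<and>
     (\<forall>e\<in>E. set_integrable lborel (edge_dom (len e)) (\<lambda>x. (u e x)\<^sup>2 + (u' e x)\<^sup>2)) \<and>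
     (\<lambda>e. LINT x:edge_dom (len e)|lborel. (u e x)\<^sup>2 + (u' e x)\<^sup>2) summable_on E \<and>
     (\<forall>e1\<in>E. \<forall>e2\<in>E.
        (src e1 = src e2 \<longrightarrow> u e1 0 = u e2 0) \<and>
        (len e2 < \<infinity> \<and> src e1 = tgt e2 \<longrightarrow> u e1 0 = u e2 (real_of_ereal (len e2))) \<and>
        (len e1 < \<infinity> \<and> len e2 < \<infinity> \<and> tgt e1 = tgt e2 \<longrightarrow>
             u e1 (real_of_ereal (len e1)) = u e2 (real_of_ereal (len e2))))"

text \<open>At the end 0 of an edge the outgoing derivative is u'_e(0); at the end len e of a
  bounded edge it is -u'_e(len e). A loop contributes both ends.\<close>
definition kirchhoff :: "'v set \<Rightarrow> 'e set \<Rightarrow> ('e \<Rightarrow> 'v) \<Rightarrow> ('e \<Rightarrow> 'v) \<Rightarrow> ('e \<Rightarrow> ereal)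
    \<Rightarrow> ('e \<Rightarrow> real \<Rightarrow> real) \<Rightarrow> bool" where
  "kirchhoff V E src tgt len u' \<longleftrightarrow>
     (\<forall>v\<in>V. (\<Sum>e\<in>{e\<in>E. src e = v}. u' e 0)
            - (\<Sum>e\<in>{e\<in>E. len e < \<infinity> \<and> tgt e = v}. u' e (real_of_ereal (len e))) = 0)"

end

theory Submission
  imports Defs
begin



lemma core_contra:
  fixes v v' :: "real \<Rightarrow> real" and M \<omega> h :: real
  assumes om: "\<omega> > 0" and Mpos: "M > 0" and hpos: "h > 0" and omh: "\<omega> * h = pi / 2"
    and der: "\<And>t. t \<in> {0..h} \<Longrightarrow> (v has_real_derivative v' t) (at t)"
    and cont: "continuous_on {0..h} v'"
    and pos: "\<And>t. t \<in> {0..h} \<Longrightarrow> v t > 0"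
    and le: "\<And>t. t \<in> {0..h} \<Longrightarrow> v t \<le> M"
    and start: "v' 0 < 0"
    and en: "\<And>t. t \<in> {0..h} \<Longrightarrow> \<omega>\<^sup>2 * (M\<^sup>2 - (v t)\<^sup>2) \<le> (v' t)\<^sup>2"
  shows False
proof -
  have neg: "v' t < 0" if t: "t \<in> {0..h}" for t
  proof (rule ccontr)
    assume "\<not> v' t < 0"
    hence vt: "0 \<le> v' t" by simp
    have contt: "continuous_on {0..t} v'" by (rule continuous_on_subset[OF cont]) (use t in auto)
    define Z where "Z = {x \<in> {0..t}. v' x = 0}"
    obtain z where z: "0 \<le> z" "z \<le> t" "v' z = 0"
      using IVT'[of v' 0 0 t] contt start vt t by auto
    have "closed Z" unfolding Z_def using continuous_closed_preimage_constant[OF contt] by auto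
    moreover have "bounded Z" unfolding Z_def by (rule bounded_subset[of "{0..t}"]) auto
    ultimately have "compact Z" using compact_eq_bounded_closed by blast
    moreover have "Z \<noteq> {}" using z unfolding Z_def by auto
    ultimately obtain t1 where t1: "t1 \<in> Z" "\<And>y. y \<in> Z \<Longrightarrow> t1 \<le> y"
      using compact_attains_inf[of Z] by auto
    have t1b: "0 \<le> t1" "t1 \<le> t" "v' t1 = 0" using t1 unfolding Z_def by auto
    have t1pos: "0 < t1" using t1b start by (metis less_eq_real_def less_irrefl)
    have negb: "v' s < 0" if s: "0 \<le> s" "s < t1" for s
    proof (rule ccontr)
      assume "\<not> v' s < 0"
      have cs: "continuous_on {0..s} v'" by (rule continuous_on_subset[OF contt]) (use s t1b in auto)
      have "v' 0 \<le> 0" "0 \<le> v' s" using start \<open>\<not> v' s < 0\<close> by auto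
      then obtain z' where "0 \<le> z'" "z' \<le> s" "v' z' = 0"
        using IVT'[of v' 0 0 s, OF _ _ s(1) cs] by blast
      hence "z' \<in> Z" using s t1b unfolding Z_def by auto
      thus False using t1(2)[of z'] \<open>z' \<le> s\<close> s by linarith
    qed
    obtain \<xi> where xi: "0 < \<xi>" "\<xi> < t1" "v t1 - v 0 = (t1 - 0) * v' \<xi>"
      using MVT2[of 0 t1 v v'] t1pos der t1b t by auto
    have "v' \<xi> < 0" using negb xi by auto
    hence "t1 * v' \<xi> < 0" using t1pos by (simp add: mult_pos_neg)
    hence "v t1 < v 0" using xi by simp
    moreover have "v 0 \<le> M" using le hpos by auto
    moreover have "v t1 > 0" using pos t1b t by auto
    ultimately have "(v t1)\<^sup>2 < M\<^sup>2" by (simp add: power_strict_mono)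
    hence "0 < \<omega>\<^sup>2 * (M\<^sup>2 - (v t1)\<^sup>2)" using om by simp
    thus False using en[of t1] t1b t by auto
  qed
  have ltM: "v t < M" if t: "0 < t" "t \<le> h" for t
  proof -
    obtain \<xi> where xi: "0 < \<xi>" "\<xi> < t" "v t - v 0 = (t - 0) * v' \<xi>"
      using MVT2[of 0 t v v'] t der by auto
    have "v' \<xi> < 0" using neg xi t by auto
    hence "t * v' \<xi> < 0" using t by (simp add: mult_pos_neg)
    hence "v t < v 0" using xi by simp
    thus ?thesis using le[of 0] hpos by auto
  qed
  define g where "g t = arccos (v t / M) - \<omega> * t" for t
  have gmono: "g s \<le> g h" if s: "0 < s" "s \<le> h" for s
  proof (rule DERIV_nonneg_imp_nondecreasing[OF s(2)])
    fix x assume x: "s \<le> x" "x \<le> h"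
    define q where "q = v x / M"
    have vx: "0 < v x" "v x < M" using pos[of x] ltM[of x] x s by auto
    have q: "0 < q" "q < 1" using vx Mpos unfolding q_def by auto
    have d1: "((\<lambda>t. v t / M) has_real_derivative v' x / M) (at x)"
      using der[of x] x s Mpos by (auto intro!: derivative_eq_intros)
    have d2: "(g has_real_derivative (inverse (- sqrt (1 - q\<^sup>2)) * (v' x / M) - \<omega>)) (at x)"
    proof -
      have a1: "(arccos has_real_derivative inverse (- sqrt (1 - q\<^sup>2))) (at (v x / M))"
        using DERIV_arccos[of q] q unfolding q_def by auto
      have a2: "((\<lambda>t. arccos (v t / M)) has_real_derivative inverse (- sqrt (1 - q\<^sup>2)) * (v' x / M)) (at x)"
        by (rule DERIV_chain2[OF a1 d1])
      have a3: "((\<lambda>t. \<omega> * t) has_real_derivative \<omega>) (at x)"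
        using DERIV_cmult_Id by blast
      show ?thesis unfolding g_def by (rule DERIV_diff[OF a2 a3])
    qed
    have sq: "M * sqrt (1 - q\<^sup>2) = sqrt (M\<^sup>2 - (v x)\<^sup>2)"
    proof -
      have "M * sqrt (1 - q\<^sup>2) = sqrt (M\<^sup>2) * sqrt (1 - q\<^sup>2)" using Mpos by simp
      also have "\<dots> = sqrt (M\<^sup>2 * (1 - q\<^sup>2))" by (simp add: real_sqrt_mult)
      also have "M\<^sup>2 * (1 - q\<^sup>2) = M\<^sup>2 - (v x)\<^sup>2" using Mpos unfolding q_def
        by (simp add: field_simps power2_eq_square)
      finally show ?thesis .
    qed
    have spos: "0 < sqrt (M\<^sup>2 - (v x)\<^sup>2)" using vx by (simp add: power_strict_mono)
    have "\<omega> * sqrt (M\<^sup>2 - (v x)\<^sup>2) = sqrt (\<omega>\<^sup>2 * (M\<^sup>2 - (v x)\<^sup>2))"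
      using om by (simp add: real_sqrt_mult)
    also have "\<dots> \<le> sqrt ((v' x)\<^sup>2)" using en[of x] x s by (intro real_sqrt_le_mono) auto
    also have "\<dots> = - v' x" using neg[of x] x s by (simp only: real_sqrt_abs) simp
    finally have key: "\<omega> * sqrt (M\<^sup>2 - (v x)\<^sup>2) \<le> - v' x" .
    have "inverse (- sqrt (1 - q\<^sup>2)) * (v' x / M) = (- v' x) / (M * sqrt (1 - q\<^sup>2))"
      by (simp add: field_simps)
    also have "\<dots> = (- v' x) / sqrt (M\<^sup>2 - (v x)\<^sup>2)" using sq by simp
    finally have eq: "inverse (- sqrt (1 - q\<^sup>2)) * (v' x / M) = (- v' x) / sqrt (M\<^sup>2 - (v x)\<^sup>2)" .
    have "\<omega> \<le> (- v' x) / sqrt (M\<^sup>2 - (v x)\<^sup>2)"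
      using key spos by (subst pos_le_divide_eq) auto
    hence "inverse (- sqrt (1 - q\<^sup>2)) * (v' x / M) \<ge> \<omega>" using eq by simp
    thus "\<exists>y. (g has_real_derivative y) (at x) \<and> 0 \<le> y" using d2 by force
  qed
  have vh: "0 < v h / M" "v h / M < 1" using pos[of h] ltM[of h] hpos Mpos by auto
  have A: "arccos (v h / M) \<ge> \<omega> * h"
  proof (rule ccontr)
    assume na: "\<not> arccos (v h / M) \<ge> \<omega> * h"
    define s where "s = min h ((\<omega> * h - arccos (v h / M)) / (2 * \<omega>))"
    have s: "0 < s" "s \<le> h" using na hpos om unfolding s_def by auto
    have "g s \<le> g h" using gmono s by auto
    moreover have "arccos (v s / M) \<ge> 0"
      using pos[of s] le[of s] s Mpos by (intro arccos_lbound) (auto simp: field_simps)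
    ultimately have "- \<omega> * s \<le> arccos (v h / M) - \<omega> * h" unfolding g_def by auto
    moreover have "\<omega> * s \<le> (\<omega> * h - arccos (v h / M)) / 2"
      using om unfolding s_def by (auto simp: field_simps min_def)
    ultimately show False using na by auto
  qed
  have "arccos (v h / M) < arccos 0" using vh by (intro arccos_less_arccos) auto
  thus False using A omh by simp
qed



lemma powr_sq_split:
  fixes X p :: real
  assumes "X > 0"
  shows "X powr p = X powr (p - 2) * X\<^sup>2"
proof -
  have "X powr p = X powr ((p - 2) + 2)" by simp
  also have "\<dots> = X powr (p - 2) * X powr 2" by (rule powr_add)
  also have "X powr 2 = X\<^sup>2" using assms by (simp add: powr_numeral)
  finally show ?thesis .
qed

lemma powr_ineq:
  fixes X Y k p :: real
  assumes "p > 2" "0 < Y" "Y \<le> X" "k \<le> X powr (p - 2)"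
  shows "k * (X\<^sup>2 - Y\<^sup>2) \<le> X powr p - Y powr p"
proof -
  have X: "X powr p = X powr (p - 2) * X\<^sup>2" using assms by (intro powr_sq_split) auto
  have Y: "Y powr p = Y powr (p - 2) * Y\<^sup>2" using assms by (intro powr_sq_split) auto
  have m: "Y powr (p - 2) \<le> X powr (p - 2)" using assms by (intro powr_mono2) auto
  have d: "0 \<le> X\<^sup>2 - Y\<^sup>2" using assms by (simp add: power_mono)
  have "k * (X\<^sup>2 - Y\<^sup>2) \<le> X powr (p - 2) * (X\<^sup>2 - Y\<^sup>2)"
    using assms d by (intro mult_right_mono) auto
  also have "\<dots> \<le> X powr (p - 2) * X\<^sup>2 - Y powr (p - 2) * Y\<^sup>2"
    using m mult_right_mono[OF m, of "Y\<^sup>2"] by (simp add: algebra_simps)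
  finally show ?thesis using X Y by simp
qed



lemma aux_lin:
  fixes A D XP YP X2 Y2 p l :: real
  assumes "A * D / p \<le> (XP - YP) / p" "D = X2 - Y2"
  shows "(A / p - l / 2) * D \<le> XP / p - l * X2 / 2 - (YP / p - l * Y2 / 2)"
proof -
  have e1: "(A / p - l / 2) * D = A * D / p - l * D / 2" by (simp add: algebra_simps)
  have e2: "(XP - YP) / p = XP / p - YP / p" by (simp add: diff_divide_distrib)
  have e3: "l * D / 2 = l * X2 / 2 - l * Y2 / 2" unfolding assms(2) by (simp add: algebra_simps diff_divide_distrib)
  show ?thesis using assms(1) e1 e2 e3 by linarith
qed

lemma single_edge:
  fixes I D :: "real set" and u u' :: "real \<Rightarrow> real" and p lam L a xz :: real
  assumes p: "p > 2" and oI: "open I" and cI: "convex I" and DI: "D = closure I"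
    and contu: "continuous_on D u"
    and du: "\<And>x. x \<in> I \<Longrightarrow> (u has_real_derivative u' x) (at x)"
    and ddu: "\<And>x. x \<in> I \<Longrightarrow> (u' has_real_derivative (lam * u x - u x powr (p - 1))) (at x)"
    and pos: "\<And>x. x \<in> D \<Longrightarrow> u x > 0"
    and xz: "xz \<in> D" and a_def: "a = u xz powr (p - 2) / p - lam / 2" and apos: "a > 0"
    and sub: "{0<..<L} \<subseteq> I" and Lbig: "pi / sqrt (2 * a) < L"
  shows False
proof -
  have ID: "I \<subseteq> D" using DI closure_subset by blast
  define F where "F y = y powr p / p - lam * y\<^sup>2 / 2" for y :: real
  have dF: "(F has_real_derivative (y powr (p - 1) - lam * y)) (at y)" if "y > 0" for y
  proof -
    have "((\<lambda>y. y powr p / p) has_real_derivative (p * y powr (p - 1)) / p) (at y)"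
      by (intro DERIV_cdivide has_real_derivative_powr that)
    moreover have "((\<lambda>y. lam * y\<^sup>2 / 2) has_real_derivative lam * (2 * y) / 2) (at y)"
      by (auto intro!: derivative_eq_intros)
    ultimately have "(F has_real_derivative (p * y powr (p - 1)) / p - lam * (2 * y) / 2) (at y)"
      unfolding F_def by (rule DERIV_diff)
    thus ?thesis using p by simp
  qed
  define E where "E x = (u' x)\<^sup>2 / 2 + F (u x)" for x
  have dE: "(E has_real_derivative 0) (at x)" if x: "x \<in> I" for x
  proof -
    have ux: "u x > 0" using pos ID x by auto
    have "((\<lambda>x. (u' x)\<^sup>2 / 2) has_real_derivative (2 * u' x * (lam * u x - u x powr (p - 1))) / 2) (at x)"
      using ddu[OF x] by (auto intro!: derivative_eq_intros)
    moreover have "((\<lambda>x. F (u x)) has_real_derivative (u x powr (p - 1) - lam * u x) * u' x) (at x)"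
      by (rule DERIV_chain2[OF dF[OF ux] du[OF x]])
    ultimately have d: "(E has_real_derivative (2 * u' x * (lam * u x - u x powr (p - 1))) / 2
        + (u x powr (p - 1) - lam * u x) * u' x) (at x)"
      unfolding E_def by (rule DERIV_add)
    have e: "(2 * u' x * (lam * u x - u x powr (p - 1))) / 2
        + (u x powr (p - 1) - lam * u x) * u' x = 0" by (simp add: field_simps)
    show ?thesis using d unfolding e .
  qed
  have dEw: "\<And>x. x \<in> I \<Longrightarrow> (E has_field_derivative 0) (at x within I)"
    using dE by (rule has_field_derivative_at_within)
  obtain C where C: "\<And>x. x \<in> I \<Longrightarrow> E x = C"
    using has_field_derivative_zero_constant[OF cI dEw] by blast
  have contF: "continuous_on S F" if "\<And>y. y \<in> S \<Longrightarrow> y > 0" for S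
    unfolding F_def using that p by (intro continuous_intros) auto
  have contFu: "continuous_on D (\<lambda>x. F (u x))"
  proof -
    have pos0: "\<forall>x\<in>D. u x \<noteq> 0" using pos by (metis less_irrefl)
    show ?thesis unfolding F_def using contu pos0 p by (intro continuous_intros) auto
  qed
  have FleC: "F (u x) \<le> C" if x: "x \<in> D" for x
  proof (rule continuous_le_on_closure[of I "\<lambda>x. F (u x)"])
    show "continuous_on (closure I) (\<lambda>x. F (u x))" using contFu DI by simp
    show "x \<in> closure I" using x DI by simp
    fix y assume y: "y \<in> I"
    have "0 \<le> (u' y)\<^sup>2 / 2" by simp
    thus "F (u y) \<le> C" using C[OF y] unfolding E_def by linarith
  qed
  define m where "m = u xz"
  have mpos: "m > 0" using pos xz m_def by auto
  have Fm: "F m \<le> C" using FleC xz m_def by auto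
  have Fdiff: "a * (X\<^sup>2 - Y\<^sup>2) \<le> F X - F Y" if "0 < Y" "Y \<le> X" "m \<le> X" for X Y
  proof -
    have k: "m powr (p - 2) \<le> X powr (p - 2)" using that mpos p by (intro powr_mono2) auto
    have "m powr (p - 2) * (X\<^sup>2 - Y\<^sup>2) \<le> X powr p - Y powr p"
      by (rule powr_ineq[OF p that(1,2) k])
    hence "m powr (p - 2) * (X\<^sup>2 - Y\<^sup>2) / p \<le> (X powr p - Y powr p) / p"
      using p by (intro divide_right_mono) auto
    thus ?thesis unfolding a_def F_def m_def[symmetric]
      by (rule aux_lin[OF _ refl])
  qed
  define R where "R = m + sqrt ((C - F m) / a)"
  have Rm: "m \<le> R" unfolding R_def using Fm apos by simp
  have "F R - F m \<ge> a * (R\<^sup>2 - m\<^sup>2)" using Fdiff[of m R] Rm mpos by auto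
  moreover have "R\<^sup>2 - m\<^sup>2 \<ge> (R - m)\<^sup>2" using Rm mpos by (simp add: power2_eq_square algebra_simps)
  moreover have "a * (R - m)\<^sup>2 = C - F m" unfolding R_def using Fm apos by simp
  moreover have "a * (R - m)\<^sup>2 \<le> a * (R\<^sup>2 - m\<^sup>2)"
    using \<open>R\<^sup>2 - m\<^sup>2 \<ge> (R - m)\<^sup>2\<close> apos by (intro mult_left_mono) auto
  ultimately have "a * (R - m)\<^sup>2 \<le> F R - F m" by linarith
  hence FR: "C \<le> F R" using \<open>a * (R - m)\<^sup>2 = C - F m\<close> by simp
  obtain M where M: "m \<le> M" "M \<le> R" "F M = C"
  proof -
    have "continuous_on {m..R} F" by (rule contF) (use mpos in auto)
    from IVT'[of F m C R, OF Fm FR Rm this] show ?thesis using that by blast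
  qed
  have Mpos: "M > 0" using M mpos by simp
  have uleM: "u x \<le> M" if x: "x \<in> D" for x
  proof (rule ccontr)
    assume "\<not> u x \<le> M"
    hence "a * ((u x)\<^sup>2 - M\<^sup>2) \<le> F (u x) - F M" using Fdiff[of M "u x"] Mpos M by auto
    moreover have "0 < a * ((u x)\<^sup>2 - M\<^sup>2)" using apos \<open>\<not> u x \<le> M\<close> Mpos
      by (simp add: power_strict_mono)
    ultimately show False using FleC[OF x] M by simp
  qed
  define \<omega> where "\<omega> = sqrt (2 * a)"
  define h where "h = pi / (2 * \<omega>)"
  have om: "\<omega> > 0" unfolding \<omega>_def using apos by simp
  have hpos: "h > 0" unfolding h_def using om by simp
  have omh: "\<omega> * h = pi / 2" unfolding h_def using om by simp
  have om2: "\<omega>\<^sup>2 = 2 * a" unfolding \<omega>_def using apos by simp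
  have Lh: "2 * h < L" using Lbig unfolding h_def \<omega>_def by simp
  have en: "\<omega>\<^sup>2 * (M\<^sup>2 - (u x)\<^sup>2) \<le> (u' x)\<^sup>2" if x: "x \<in> I" for x
  proof -
    have "a * (M\<^sup>2 - (u x)\<^sup>2) \<le> F M - F (u x)" using Fdiff[of "u x" M] pos uleM ID x M by auto
    moreover have "(u' x)\<^sup>2 = 2 * (C - F (u x))" using C[OF x] unfolding E_def by simp
    ultimately show ?thesis using om2 M by simp
  qed
  have inI: "y \<in> I" if "0 < y" "y < L" for y using sub that by auto
  have claim1: False if c: "0 < c" "c + h < L" "u' c < 0" for c
  proof (rule core_contra[OF om Mpos hpos omh, of "\<lambda>t. u (c + t)" "\<lambda>t. u' (c + t)"])
    fix t assume t: "t \<in> {0..h}"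
    hence I: "c + t \<in> I" using inI c hpos by auto
    have d1: "((\<lambda>t. c + t) has_real_derivative 1) (at t)" by (auto intro!: derivative_eq_intros)
    have "((\<lambda>t. u (c + t)) has_real_derivative u' (c + t) * 1) (at t)" by (rule DERIV_chain2[OF du[OF I] d1])
    thus "((\<lambda>t. u (c + t)) has_real_derivative u' (c + t)) (at t)" by simp
    show "0 < u (c + t)" using pos ID I by auto
    show "u (c + t) \<le> M" using uleM ID I by auto
    show "\<omega>\<^sup>2 * (M\<^sup>2 - (u (c + t))\<^sup>2) \<le> (u' (c + t))\<^sup>2" using en I by auto
  next
    show "u' (c + 0) < 0" using c by simp
  next
    have "isCont (\<lambda>t. u' (c + t)) t" if t: "t \<in> {0..h}" for t
    proof -
      have I: "c + t \<in> I" using t inI c hpos by auto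
      have d1: "((\<lambda>t. c + t) has_real_derivative 1) (at t)" by (auto intro!: derivative_eq_intros)
      have "((\<lambda>t. u' (c + t)) has_real_derivative (lam * u (c + t) - u (c + t) powr (p - 1)) * 1) (at t)"
        by (rule DERIV_chain2[OF ddu[OF I] d1])
      thus ?thesis by (rule DERIV_isCont)
    qed
    thus "continuous_on {0..h} (\<lambda>t. u' (c + t))" by (intro continuous_at_imp_continuous_on) auto
  qed
  have claim2: False if c: "0 < c - h" "c < L" "u' c > 0" for c
  proof (rule core_contra[OF om Mpos hpos omh, of "\<lambda>t. u (c - t)" "\<lambda>t. - u' (c - t)"])
    fix t assume t: "t \<in> {0..h}"
    hence I: "c - t \<in> I" using inI c hpos by auto
    have d1: "((\<lambda>t. c - t) has_real_derivative -1) (at t)" by (auto intro!: derivative_eq_intros)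
    have "((\<lambda>t. u (c - t)) has_real_derivative u' (c - t) * -1) (at t)" by (rule DERIV_chain2[OF du[OF I] d1])
    thus "((\<lambda>t. u (c - t)) has_real_derivative - u' (c - t)) (at t)" by simp
    show "0 < u (c - t)" using pos ID I by auto
    show "u (c - t) \<le> M" using uleM ID I by auto
    show "\<omega>\<^sup>2 * (M\<^sup>2 - (u (c - t))\<^sup>2) \<le> (- u' (c - t))\<^sup>2" using en I by auto
  next
    show "- u' (c - 0) < 0" using c by simp
  next
    have "isCont (\<lambda>t. - u' (c - t)) t" if t: "t \<in> {0..h}" for t
    proof -
      have I: "c - t \<in> I" using t inI c hpos by auto
      have d1: "((\<lambda>t. c - t) has_real_derivative -1) (at t)" by (auto intro!: derivative_eq_intros)
      have "((\<lambda>t. u' (c - t)) has_real_derivative (lam * u (c - t) - u (c - t) powr (p - 1)) * (-1)) (at t)"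
        by (rule DERIV_chain2[OF ddu[OF I] d1])
      hence "isCont (\<lambda>t. u' (c - t)) t" by (rule DERIV_isCont)
      thus ?thesis by (intro continuous_intros)
    qed
    thus "continuous_on {0..h} (\<lambda>t. - u' (c - t))" by (intro continuous_at_imp_continuous_on) auto
  qed
  define c where "c = L / 2"
  have cI: "c \<in> I" using inI hpos Lh unfolding c_def by auto
  consider "u' c < 0" | "u' c > 0" | "u' c = 0" by linarith
  thus False
  proof cases
    case 1 thus False using claim1[of c] Lh hpos unfolding c_def by auto
  next
    case 2 thus False using claim2[of c] Lh hpos unfolding c_def by auto
  next
    case 3
    have ucM: "u c = M"
    proof -
      have "\<omega>\<^sup>2 * (M\<^sup>2 - (u c)\<^sup>2) \<le> 0" using en[OF cI] 3 by simp
      hence "M\<^sup>2 \<le> (u c)\<^sup>2" using om by (simp add: mult_le_0_iff)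
      moreover have "0 \<le> u c" using pos[of c] ID cI by auto
      ultimately have "M \<le> u c" by (rule power2_le_imp_le)
      thus ?thesis using uleM[of c] ID cI by auto
    qed
    have mp: "m powr (p - 2) > p * lam / 2" using apos unfolding a_def m_def using p
      by (simp add: field_simps)
    have Mp: "M powr (p - 2) \<ge> m powr (p - 2)" using M mpos p by (intro powr_mono2) auto
    have Mlam: "M powr (p - 2) > lam"
    proof (cases "lam \<ge> 0")
      case True
      have "lam * 2 \<le> lam * p" using True p by (intro mult_left_mono) auto
      hence "p * lam / 2 \<ge> lam" by (simp add: field_simps)
      thus ?thesis using mp Mp by linarith
    next
      case False
      have "m powr (p - 2) > 0" using mpos by simp
      thus ?thesis using Mp False by linarith
    qed
    have "M powr (p - 1) = M powr (p - 2) * M"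
    proof -
      have "M powr (p - 1) = M powr ((p - 2) + 1)" by simp
      also have "\<dots> = M powr (p - 2) * M powr 1" by (rule powr_add)
      finally show ?thesis using Mpos by simp
    qed
    hence neg2: "lam * u c - u c powr (p - 1) < 0" using ucM Mlam Mpos
      by (simp add: mult_strict_right_mono)
    obtain d where d: "d > 0" "\<And>t. t > 0 \<Longrightarrow> t < d \<Longrightarrow> u' (c + t) < u' c"
      using DERIV_neg_dec_right[OF ddu[OF cI] neg2] by blast
    define t where "t = min d (L / 2 - h) / 2"
    have t: "t > 0" "t < d" "t < L/2 - h" using d Lh unfolding t_def by auto
    show False using claim1[of "c + t"] d(2)[of t] t 3 hpos unfolding c_def by auto
  qed
qed





lemma edge_point_bound:
  fixes l :: ereal and U U' :: "real \<Rightarrow> real" and p lam a x0 :: real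
  assumes p: "p > 2" and l0: "0 < l"
    and der: "\<forall>x\<in>edge_dom l. (U has_real_derivative U' x) (at x within edge_dom l)"
    and ode: "\<forall>x\<in>edge_dom l. 0 < x \<and> ereal x < l \<longrightarrow>
           (U' has_real_derivative (lam * U x - U x powr (p - 1))) (at x)"
    and pos: "\<forall>x\<in>edge_dom l. U x > 0"
    and x0: "x0 \<in> edge_dom l" and a_def: "a = U x0 powr (p - 2) / p - lam / 2" and apos: "a > 0"
    and len: "l = \<infinity> \<or> ereal (pi / sqrt (2 * a)) < l"
  shows False
proof -
  have cont: "continuous_on (edge_dom l) U"
    using der by (auto simp: continuous_on_eq_continuous_within intro: DERIV_continuous)
  show False
  proof (cases l)
    case (real r)
    have r0: "r > 0" using l0 real by simp
    have D: "edge_dom l = {0..r}" unfolding edge_dom_def real by auto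
    have rL: "pi / sqrt (2 * a) < r" using len real by simp
    show False
    proof (rule single_edge[where I="{0<..<r}" and D="{0..r}" and u=U and u'=U' and xz=x0 and a=a and L=r and p=p and lam=lam])
      show "2 < p" "a = U x0 powr (p - 2) / p - lam / 2" "0 < a" "pi / sqrt (2 * a) < r" using p a_def apos rL by auto
      show "open {0<..<r}" by simp
      show "convex {0<..<r}" by simp
      show "{0..r} = closure {0<..<r}" using r0 by simp
      show "continuous_on {0..r} U" using cont D by simp
      show "x0 \<in> {0..r}" using x0 D by simp
      show "{0<..<r} \<subseteq> {0<..<r}" by simp
    next
      fix x :: real assume x: "x \<in> {0<..<r}"
      have "x \<in> interior {0..r}" using x by simp
      hence aw: "at x within {0..r} = at x" by (rule at_within_interior)
      have "(U has_real_derivative U' x) (at x within {0..r})" using der D x by auto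
      thus "(U has_real_derivative U' x) (at x)" unfolding aw .
      show "(U' has_real_derivative lam * U x - U x powr (p - 1)) (at x)"
        using ode D x real by auto
    next
      fix x :: real assume "x \<in> {0..r}"
      thus "0 < U x" using pos D by auto
    qed
  next
    case PInf
    have D: "edge_dom l = {0..}" unfolding edge_dom_def PInf by auto
    define L where "L = pi / sqrt (2 * a) + 1"
    have rL: "pi / sqrt (2 * a) < L" unfolding L_def by simp
    show False
    proof (rule single_edge[where I="{0<..}" and D="{0..}" and u=U and u'=U' and xz=x0 and a=a and L=L and p=p and lam=lam])
      show "2 < p" "a = U x0 powr (p - 2) / p - lam / 2" "0 < a" "pi / sqrt (2 * a) < L" using p a_def apos rL by auto
      show "open {0::real<..}" by (rule open_greaterThan)
      show "convex {0::real<..}" by simp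
      show "{0..} = closure {0::real<..}" by simp
      show "continuous_on {0..} U" using cont D by simp
      show "x0 \<in> {0..}" using x0 D by simp
      show "{0<..<L} \<subseteq> {0<..}" by auto
    next
      fix x :: real assume x: "x \<in> {0<..}"
      have "x \<in> interior {0..}" using x by (simp add: interior_real_atLeast)
      hence aw: "at x within {0..} = at x" by (rule at_within_interior)
      have "(U has_real_derivative U' x) (at x within {0..})" using der D x by auto
      thus "(U has_real_derivative U' x) (at x)" unfolding aw .
      show "(U' has_real_derivative lam * U x - U x powr (p - 1)) (at x)"
        using ode D x PInf by auto
    next
      fix x :: real assume "x \<in> {0..}"
      thus "0 < U x" using pos D by auto
    qed
  next
    case MInf thus False using l0 by simp
  qed
qed



theorem lemma2p5:
  fixes V :: "'v set" and E :: "'e set" and src tgt :: "'e \<Rightarrow> 'v" and len :: "'e \<Rightarrow> ereal"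
    and u u' :: "'e \<Rightarrow> real \<Rightarrow> real" and p lam :: real
  assumes "p > 2"
    and "metric_graph_G V E src tgt len"
    and "in_H1 V E src tgt len u u'"
    and "\<forall>e\<in>E. \<forall>x\<in>edge_dom (len e). u e x > 0"
    and "\<forall>e\<in>E. \<forall>x\<in>edge_dom (len e). 0 < x \<and> ereal x < len e \<longrightarrow>
           (u' e has_real_derivative (lam * u e x - u e x powr (p - 1))) (at x)"
    and "kirchhoff V E src tgt len u'"
  shows "(SUP e\<in>E. SUP x\<in>edge_dom (len e). ereal \<bar>u e x\<bar>)
         \<le> ereal ((p / 2 * lam + (if min_edge_len E len = \<infinity> then 0
                    else p * pi\<^sup>2 / (2 * (real_of_ereal (min_edge_len E len))\<^sup>2)))
                  powr (1 / (p - 2)))"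
proof -
  have E0: "E \<noteq> {}" and lenpos: "\<And>e. e \<in> E \<Longrightarrow> 0 < len e"
    and e0pos: "0 < (INF e\<in>E. len e)"
    using assms(2) unfolding metric_graph_G_def by auto
  define e0 where "e0 = min_edge_len E len"
  have e0p: "0 < e0" using e0pos unfolding e0_def min_edge_len_def .
  have e0le: "e0 \<le> len e" if "e \<in> E" for e
    unfolding e0_def min_edge_len_def using that by (rule INF_lower)
  define B where "B = p / 2 * lam + (if e0 = \<infinity> then 0
                    else p * pi\<^sup>2 / (2 * (real_of_ereal e0)\<^sup>2))"
  have BB: "p * lam / 2 \<le> B" unfolding B_def using assms(1) by auto
  have der: "\<forall>x\<in>edge_dom (len e). (u e has_real_derivative u' e x) (at x within edge_dom (len e))"
    if "e \<in> E" for e using assms(3) that unfolding in_H1_def by blast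
  have key: "u e x powr (p - 2) \<le> B" if e: "e \<in> E" and x: "x \<in> edge_dom (len e)" for e x
  proof (rule ccontr)
    assume na: "\<not> u e x powr (p - 2) \<le> B"
    define a where "a = u e x powr (p - 2) / p - lam / 2"
    have p0: "p > 0" using assms(1) by simp
    have "u e x powr (p - 2) / p > B / p" using na p0 by (simp add: divide_strict_right_mono)
    moreover have "B / p \<ge> lam / 2" using BB p0 by (simp add: field_simps)
    ultimately have apos: "a > 0" unfolding a_def by linarith
    have lencond: "len e = \<infinity> \<or> ereal (pi / sqrt (2 * a)) < len e"
    proof (cases "e0 = \<infinity>")
      case True thus ?thesis using e0le[OF e] by simp
    next
      case False
      then obtain r where r: "e0 = ereal r" using e0p by (cases e0) auto
      have r0: "r > 0" using e0p r by simp
      have Bv: "B = p / 2 * lam + p * pi\<^sup>2 / (2 * r\<^sup>2)" unfolding B_def using False r by simp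
      have "B / p - lam / 2 = pi\<^sup>2 / (2 * r\<^sup>2)" unfolding Bv using p0 by (simp add: field_simps)
      hence "a > pi\<^sup>2 / (2 * r\<^sup>2)" unfolding a_def using \<open>u e x powr (p - 2) / p > B / p\<close> by simp
      hence "2 * a > (pi / r)\<^sup>2" using r0 by (simp add: field_simps power_divide)
      hence "sqrt (2 * a) > sqrt ((pi / r)\<^sup>2)" by (rule real_sqrt_less_mono)
      hence s: "sqrt (2 * a) > pi / r" using r0 by simp
      have "pi / sqrt (2 * a) < r"
      proof -
        have sp: "sqrt (2 * a) > 0" using apos by simp
        have "pi < r * sqrt (2 * a)" using s r0 by (simp add: field_simps)
        thus ?thesis using sp by (simp add: field_simps)
      qed
      hence "ereal (pi / sqrt (2 * a)) < e0" using r by simp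
      hence "ereal (pi / sqrt (2 * a)) < len e" using e0le[OF e] by (rule less_le_trans)
      thus ?thesis by blast
    qed
    show False
      by (rule edge_point_bound[OF assms(1) lenpos[OF e] der[OF e] _ _ x a_def apos lencond])
         (use assms(4,5) e in auto)
  qed
  have bound: "u e x \<le> B powr (1 / (p - 2))" if e: "e \<in> E" and x: "x \<in> edge_dom (len e)" for e x
  proof -
    have ux: "u e x > 0" using assms(4) e x by auto
    have "u e x = (u e x powr (p - 2)) powr (1 / (p - 2))"
      using ux assms(1) by (simp add: powr_powr)
    also have "\<dots> \<le> B powr (1 / (p - 2))"
      using key[OF e x] assms(1) by (intro powr_mono2) auto
    finally show ?thesis .
  qed
  show ?thesis
  proof (intro SUP_least)
    fix e x assume e: "e \<in> E" and x: "x \<in> edge_dom (len e)"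
    have "0 < u e x" using assms(4) e x by blast
    hence "\<bar>u e x\<bar> = u e x" by simp
    thus "ereal \<bar>u e x\<bar> \<le> ereal ((p / 2 * lam + (if min_edge_len E len = \<infinity> then 0
                    else p * pi\<^sup>2 / (2 * (real_of_ereal (min_edge_len E len))\<^sup>2)))
                  powr (1 / (p - 2)))"
      using bound[OF e x] unfolding B_def e0_def by simp
  qed
qed


end
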